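(* Let $\lambda<\mathfrak{t}$ be an infinite cardinal, let $A\subseteq\omega$ be infinite, and let $(f_\alpha:\alpha<\lambda)$ be a sequence of functions $f_\alpha:\omega\to[\omega]^{<\aleph_0}$ such that $f_\beta\le_A f_\alpha$ for all $\alpha<\beta<\lambda$, and such that for each $\alpha<\lambda$ the set $\{m\in A: f_\alpha(m)=\emptyset\}$ is finite. Then there exist an infinite $B\subseteq A$ and a function $f:\omega\to[\omega]^{<\aleph_0}$ such that $f\le_B f_\alpha$ for every $\alpha<\lambda$ and $f(m)\neq\emptyset$ for every $m\in B$.
   Context: $[\omega]^{<\aleph_0}$ is the set of finite subsets of $\omega$. For $X,Y\subseteq\omega$ (or of $\omega\times\omega$), $X\subseteq_* Y$ means $X\setminus Y$ is finite. A tower is a sequence $(X_\alpha:\alpha<\kappa)$ of infinite subsets of $\omega$ with $X_\beta\subseteq_* X_\alpha$ whenever $\alpha<\beta<\kappa$; a pseudo-intersection of a family of sets is an infinite $X$ with $X\subseteq_* B$ for every member $B$ of the family. $\mathfrak{t}$ is the least cardinality of a tower with no pseudo-intersection. For $f,g:\omega\to[\omega]^{<\aleph_0}$ and infinite $A\subseteq\omega$, $f\le_A g$ means that $\{n\in A: f(n)\not\subseteq g(n)\}$ is finite. *)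

theory Defs
  imports Main
begin

text \<open>Cardinals are represented as in HOL's BNF cardinal library: an (infinite)
cardinal \<lambda> is a relation r with Card_order r (an initial ordinal, i.e. a well-order
minimal in its cardinality) whose field is infinite. Indices \<alpha> < \<lambda> are the
elements of Field r, and \<alpha> < \<beta> means (\<alpha>,\<beta>) \<in> r and \<alpha> \<noteq> \<beta>.\<close>

definition strict_less :: "'a rel \<Rightarrow> 'a \<Rightarrow> 'a \<Rightarrow> bool" where
  "strict_less r a b \<longleftrightarrow> (a, b) \<in> r \<and> a \<noteq> b"

definition is_tower :: "'a rel \<Rightarrow> 'a set \<Rightarrow> ('a \<Rightarrow> nat set) \<Rightarrow> bool" where
  "is_tower r S X \<longleftrightarrow> (\<forall>a\<in>S. infinite (X a)) \<and>
     (\<forall>a\<in>S. \<forall>b\<in>S. strict_less r a b \<longrightarrow> finite (X b - X a))"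

definition pseudo_intersection :: "nat set \<Rightarrow> nat set set \<Rightarrow> bool" where
  "pseudo_intersection P F \<longleftrightarrow> infinite P \<and> (\<forall>Y\<in>F. finite (P - Y))"

text \<open>\<lambda> < t: every tower whose length is an ordinal \<le> \<lambda> has a pseudo-intersection.
The order types of subsets of \<lambda> are exactly the ordinals \<le> \<lambda>.\<close>
definition below_tower_number :: "'a rel \<Rightarrow> bool" where
  "below_tower_number r \<longleftrightarrow>
     (\<forall>S \<subseteq> Field r. \<forall>X. is_tower r S X \<longrightarrow> (\<exists>P. pseudo_intersection P (X ` S)))"

definition le_on :: "nat set \<Rightarrow> (nat \<Rightarrow> nat set) \<Rightarrow> (nat \<Rightarrow> nat set) \<Rightarrow> bool" where
  "le_on A f g \<longleftrightarrow> finite {n \<in> A. \<not> f n \<subseteq> g n}"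

end

theory Submission
  imports Defs "HOL-Library.Nat_Bijection"
begin

theorem mainTheorem9:
  fixes r :: "'a rel" and A :: "nat set" and F :: "'a \<Rightarrow> nat \<Rightarrow> nat set"
  assumes "Card_order r" and "infinite (Field r)" and "below_tower_number r"
    and "infinite A"
    and "\<forall>a\<in>Field r. \<forall>n. finite (F a n)"
    and "\<forall>a\<in>Field r. \<forall>b\<in>Field r. strict_less r a b \<longrightarrow> le_on A (F b) (F a)"
    and "\<forall>a\<in>Field r. finite {m \<in> A. F a m = {}}"
  shows "\<exists>B f. B \<subseteq> A \<and> infinite B \<and> (\<forall>n. finite (f n)) \<and>
           (\<forall>a\<in>Field r. le_on B f (F a)) \<and> (\<forall>m\<in>B. f m \<noteq> {})"
proof -
  define Y where "Y a = Sigma A (F a)" for a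
  define X where "X a = prod_encode ` Y a" for a
  have injE: "inj prod_encode" by (rule inj_prod_encode)
  have Yinf: "infinite (Y a)" if a: "a \<in> Field r" for a
  proof
    assume fin: "finite (Y a)"
    have "A - {m \<in> A. F a m = {}} \<subseteq> fst ` Y a"
    proof
      fix m assume m: "m \<in> A - {m \<in> A. F a m = {}}"
      then obtain k where "k \<in> F a m" by blast
      with m have "(m, k) \<in> Y a" unfolding Y_def by blast
      thus "m \<in> fst ` Y a" by (metis fst_conv image_eqI)
    qed
    hence "finite (A - {m \<in> A. F a m = {}})" using fin finite_subset by blast
    hence "finite A" using assms(7) a by (metis Diff_infinite_finite)
    thus False using assms(4) by simp
  qed
  have Ydiff: "finite (Y b - Y a)" if a: "a \<in> Field r" and b: "b \<in> Field r"
    and s: "strict_less r a b" for a b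
  proof -
    have E: "finite {n \<in> A. \<not> F b n \<subseteq> F a n}"
      using assms(6) a b s unfolding le_on_def by blast
    have "Y b - Y a \<subseteq> Sigma {n \<in> A. \<not> F b n \<subseteq> F a n} (F b)"
      unfolding Y_def by auto
    moreover have "finite (Sigma {n \<in> A. \<not> F b n \<subseteq> F a n} (F b))"
      using E assms(5) b by (intro finite_SigmaI) auto
    ultimately show ?thesis using finite_subset by blast
  qed
  have tower: "is_tower r (Field r) X"
    unfolding is_tower_def
  proof (intro conjI ballI impI)
    fix a assume "a \<in> Field r"
    thus "infinite (X a)" unfolding X_def using Yinf injE
      by (simp add: finite_image_iff inj_on_subset)
  next
    fix a b assume a: "a \<in> Field r" and b: "b \<in> Field r" and s: "strict_less r a b"
    have "X b - X a = prod_encode ` (Y b - Y a)" unfolding X_def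
      using injE by (simp add: image_set_diff)
    thus "finite (X b - X a)" using Ydiff[OF a b s] by simp
  qed
  obtain P where P: "pseudo_intersection P (X ` Field r)"
    using assms(3) tower unfolding below_tower_number_def by blast
  have Pinf: "infinite P" and Pfin: "\<And>a. a \<in> Field r \<Longrightarrow> finite (P - X a)"
    using P unfolding pseudo_intersection_def by auto
  define Q where "Q = prod_decode ` P"
  have PQ: "P = prod_encode ` Q" unfolding Q_def image_image by simp
  have Qinf: "infinite Q" using Pinf PQ by auto
  have Qfin: "finite (Q - Y a)" if a: "a \<in> Field r" for a
  proof -
    have "Q - Y a \<subseteq> prod_decode ` (P - X a)"
    proof
      fix q assume q: "q \<in> Q - Y a"
      hence "prod_encode q \<in> P" using PQ by auto
      moreover have "prod_encode q \<notin> X a" using q injE unfolding X_def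
        by (auto dest: injD)
      ultimately show "q \<in> prod_decode ` (P - X a)"
        by (metis DiffI image_eqI prod_encode_inverse)
    qed
    thus ?thesis using Pfin[OF a] finite_subset by blast
  qed
  obtain a0 where a0: "a0 \<in> Field r" using assms(2) by fastforce
  define f where "f n = {k. (n, k) \<in> Q}" for n
  define B where "B = {n \<in> A. f n \<noteq> {}}"
  have ffin: "finite (f n)" for n
  proof -
    have "f n \<subseteq> snd ` (Q - Y a0) \<union> F a0 n" unfolding f_def Y_def by force
    moreover have "finite (snd ` (Q - Y a0) \<union> F a0 n)"
      using Qfin[OF a0] assms(5) a0 by simp
    ultimately show ?thesis using finite_subset by blast
  qed
  have Binf: "infinite B"
  proof
    assume fin: "finite B"
    have "Q \<subseteq> (Q - Y a0) \<union> Sigma B f" unfolding B_def f_def Y_def by auto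
    moreover have "finite ((Q - Y a0) \<union> Sigma B f)"
      using fin ffin Qfin[OF a0] by (simp add: finite_SigmaI)
    ultimately show False using Qinf finite_subset by blast
  qed
  have le: "le_on B f (F a)" if a: "a \<in> Field r" for a
  proof -
    have "{n \<in> B. \<not> f n \<subseteq> F a n} \<subseteq> fst ` (Q - Y a)"
      unfolding B_def f_def Y_def by force
    thus ?thesis unfolding le_on_def using Qfin[OF a] finite_subset by blast
  qed
  show ?thesis
    by (rule exI[of _ B], rule exI[of _ f]) (use Binf ffin le in \<open>auto simp: B_def\<close>)
qed

end
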